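(* Let $G\in\mathcal{C}$, let $H$ be a hole of $G$, and let $u,v\in V(G)\setminus V(H)$ cross with respect to $H$. Then one of the following holds: (i) $H$ contains four distinct vertices $u',v',u'',v''$, appearing in this order along $H$, with $u',u''\in N_H(u)$ and $v',v''\in N_H(v)$; (ii) $N_H(u)=N_H(v)$, $N_H(u)$ is an independent set of size $3$, and $uv\in E(G)$; (iii) $N_H(u)=N_H(v)$, both $u$ and $v$ are clones in $H$ (of the same vertex), and $uv\in E(G)$.
   Context: All graphs are finite and simple; paths are induced paths; a hole is an induced cycle of length at least four. $\mathcal{C}$ is the class of graphs containing no theta, pyramid, prism or turtle as an induced subgraph, where: a theta consists of two nonadjacent vertices $a,b$ and three paths from $a$ to $b$, otherwise vertex-disjoint, any two of which induce a hole; a pyramid consists of a vertex $a$, a triangle $\{b_1,b_2,b_3\}$ and paths $P_i$ from $a$ to $b_i$, pairwise disjoint except at $a$, any two of which induce a hole; a prism consists of two disjoint triangles $\{a_1,a_2,a_3\},\{b_1,b_2,b_3\}$ and pairwise disjoint paths $P_i$ from $a_i$ to $b_i$, any two of which induce a hole; a turtle consists of disjoint paths $P_1$ (from $a_1$ to $b_1$), $P_2$ (from $a_2$ to $b_2$) with $a_1a_2,b_1b_2$ edges and $V(P_1)\cup V(P_2)$ inducing a hole, plus adjacent vertices $x,y$ where $x$ has at least three neighbors in $P_1$ and none in $P_2$, and $y$ has at least three neighbors in $P_2$ and none in $P_1$. For a hole $H$ and $u\notin V(H)$, $N_H(u)$ is the set of neighbors of $u$ in $H$. A vertex $u\notin V(H)$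 is a clone of $y\in V(H)$ if $N_H(u)=\{x,y,z\}$ where $x\text{-}y\text{-}z$ is a subpath of $H$. Two vertices $u,v\notin V(H)$ are nested with respect to $H$ if there exist distinct $a,b\in V(H)$ such that one of the two $a$–$b$ paths of $H$ contains all neighbors of $u$ in $H$ and the other contains all neighbors of $v$ in $H$; they cross if they are not nested. *)

theory Defs
  imports Main
begin

definition graph :: "'a set \<Rightarrow> ('a \<Rightarrow> 'a \<Rightarrow> bool) \<Rightarrow> bool" where
  "graph V E \<longleftrightarrow> finite V \<and> (\<forall>x y. E x y \<longrightarrow> x \<in> V \<and> y \<in> V)
     \<and> (\<forall>x y. E x y \<longrightarrow> E y x) \<and> (\<forall>x. \<not> E x x)"

definition ipath :: "('a \<Rightarrow> 'a \<Rightarrow> bool) \<Rightarrow> 'a list \<Rightarrow> bool" where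
  "ipath E xs \<longleftrightarrow> xs \<noteq> [] \<and> distinct xs \<and>
     (\<forall>i j. i < length xs \<longrightarrow> j < length xs \<longrightarrow> (E (xs!i) (xs!j) \<longleftrightarrow> (i + 1 = j \<or> j + 1 = i)))"

definition path_from_to :: "'a set \<Rightarrow> ('a \<Rightarrow> 'a \<Rightarrow> bool) \<Rightarrow> 'a list \<Rightarrow> 'a \<Rightarrow> 'a \<Rightarrow> bool" where
  "path_from_to V E P a b \<longleftrightarrow> set P \<subseteq> V \<and> ipath E P \<and> hd P = a \<and> last P = b"

definition hole :: "('a \<Rightarrow> 'a \<Rightarrow> bool) \<Rightarrow> 'a list \<Rightarrow> bool" where
  "hole E xs \<longleftrightarrow> length xs \<ge> 4 \<and> distinct xs \<and>
     (\<forall>i j. i < length xs \<longrightarrow> j < length xs \<longrightarrow>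
        (E (xs!i) (xs!j) \<longleftrightarrow> (j = Suc i mod length xs \<or> i = Suc j mod length xs)))"

definition is_hole :: "'a set \<Rightarrow> ('a \<Rightarrow> 'a \<Rightarrow> bool) \<Rightarrow> 'a list \<Rightarrow> bool" where
  "is_hole V E H \<longleftrightarrow> set H \<subseteq> V \<and> hole E H"

definition induces_hole :: "('a \<Rightarrow> 'a \<Rightarrow> bool) \<Rightarrow> 'a set \<Rightarrow> bool" where
  "induces_hole E S \<longleftrightarrow> (\<exists>xs. set xs = S \<and> hole E xs)"

definition has_theta :: "'a set \<Rightarrow> ('a \<Rightarrow> 'a \<Rightarrow> bool) \<Rightarrow> bool" where
  "has_theta V E \<longleftrightarrow> (\<exists>a b P1 P2 P3. a \<noteq> b \<and> \<not> E a b \<and>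
     path_from_to V E P1 a b \<and> path_from_to V E P2 a b \<and> path_from_to V E P3 a b \<and>
     set P1 \<inter> set P2 = {a, b} \<and> set P1 \<inter> set P3 = {a, b} \<and> set P2 \<inter> set P3 = {a, b} \<and>
     induces_hole E (set P1 \<union> set P2) \<and> induces_hole E (set P1 \<union> set P3) \<and>
     induces_hole E (set P2 \<union> set P3))"

definition triangle :: "('a \<Rightarrow> 'a \<Rightarrow> bool) \<Rightarrow> 'a \<Rightarrow> 'a \<Rightarrow> 'a \<Rightarrow> bool" where
  "triangle E x y z \<longleftrightarrow> x \<noteq> y \<and> y \<noteq> z \<and> x \<noteq> z \<and> E x y \<and> E y z \<and> E x z"

definition has_pyramid :: "'a set \<Rightarrow> ('a \<Rightarrow> 'a \<Rightarrow> bool) \<Rightarrow> bool" where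
  "has_pyramid V E \<longleftrightarrow> (\<exists>a b1 b2 b3 P1 P2 P3. triangle E b1 b2 b3 \<and>
     path_from_to V E P1 a b1 \<and> path_from_to V E P2 a b2 \<and> path_from_to V E P3 a b3 \<and>
     set P1 \<inter> set P2 = {a} \<and> set P1 \<inter> set P3 = {a} \<and> set P2 \<inter> set P3 = {a} \<and>
     induces_hole E (set P1 \<union> set P2) \<and> induces_hole E (set P1 \<union> set P3) \<and>
     induces_hole E (set P2 \<union> set P3))"

definition has_prism :: "'a set \<Rightarrow> ('a \<Rightarrow> 'a \<Rightarrow> bool) \<Rightarrow> bool" where
  "has_prism V E \<longleftrightarrow> (\<exists>a1 a2 a3 b1 b2 b3 P1 P2 P3. triangle E a1 a2 a3 \<and> triangle E b1 b2 b3 \<and>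
     {a1, a2, a3} \<inter> {b1, b2, b3} = {} \<and>
     path_from_to V E P1 a1 b1 \<and> path_from_to V E P2 a2 b2 \<and> path_from_to V E P3 a3 b3 \<and>
     set P1 \<inter> set P2 = {} \<and> set P1 \<inter> set P3 = {} \<and> set P2 \<inter> set P3 = {} \<and>
     induces_hole E (set P1 \<union> set P2) \<and> induces_hole E (set P1 \<union> set P3) \<and>
     induces_hole E (set P2 \<union> set P3))"

definition has_turtle :: "'a set \<Rightarrow> ('a \<Rightarrow> 'a \<Rightarrow> bool) \<Rightarrow> bool" where
  "has_turtle V E \<longleftrightarrow> (\<exists>a1 b1 a2 b2 P1 P2 x y.
     path_from_to V E P1 a1 b1 \<and> path_from_to V E P2 a2 b2 \<and> set P1 \<inter> set P2 = {} \<and>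
     E a1 a2 \<and> E b1 b2 \<and> induces_hole E (set P1 \<union> set P2) \<and>
     x \<in> V \<and> y \<in> V \<and> x \<notin> set P1 \<union> set P2 \<and> y \<notin> set P1 \<union> set P2 \<and> E x y \<and>
     card {z \<in> set P1. E x z} \<ge> 3 \<and> {z \<in> set P2. E x z} = {} \<and>
     card {z \<in> set P2. E y z} \<ge> 3 \<and> {z \<in> set P1. E y z} = {})"

definition in_C :: "'a set \<Rightarrow> ('a \<Rightarrow> 'a \<Rightarrow> bool) \<Rightarrow> bool" where
  "in_C V E \<longleftrightarrow> graph V E \<and> \<not> has_theta V E \<and> \<not> has_pyramid V E \<and>
     \<not> has_prism V E \<and> \<not> has_turtle V E"

definition nbrs_in :: "('a \<Rightarrow> 'a \<Rightarrow> bool) \<Rightarrow> 'a list \<Rightarrow> 'a \<Rightarrow> 'a set" where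
  "nbrs_in E H u = {x \<in> set H. E u x}"

definition clone_of :: "('a \<Rightarrow> 'a \<Rightarrow> bool) \<Rightarrow> 'a list \<Rightarrow> 'a \<Rightarrow> 'a \<Rightarrow> bool" where
  "clone_of E H u y \<longleftrightarrow> u \<notin> set H \<and> (\<exists>i < length H. y = H ! i \<and>
     nbrs_in E H u = {H ! ((i + length H - 1) mod length H), H ! i, H ! (Suc i mod length H)})"

text \<open>Vertex set of the path of H going forward from position i to position j.\<close>
definition arc :: "'a list \<Rightarrow> nat \<Rightarrow> nat \<Rightarrow> 'a set" where
  "arc H i j = {H ! ((i + k) mod length H) | k. k \<le> (j + length H - i) mod length H}"

definition nested :: "('a \<Rightarrow> 'a \<Rightarrow> bool) \<Rightarrow> 'a list \<Rightarrow> 'a \<Rightarrow> 'a \<Rightarrow> bool" where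
  "nested E H u v \<longleftrightarrow> u \<notin> set H \<and> v \<notin> set H \<and>
     (\<exists>i j. i < length H \<and> j < length H \<and> i \<noteq> j \<and>
        nbrs_in E H u \<subseteq> arc H i j \<and> nbrs_in E H v \<subseteq> arc H j i)"

definition cross :: "('a \<Rightarrow> 'a \<Rightarrow> bool) \<Rightarrow> 'a list \<Rightarrow> 'a \<Rightarrow> 'a \<Rightarrow> bool" where
  "cross E H u v \<longleftrightarrow> u \<notin> set H \<and> v \<notin> set H \<and> \<not> nested E H u v"

definition cyc_order4 :: "'a list \<Rightarrow> 'a \<Rightarrow> 'a \<Rightarrow> 'a \<Rightarrow> 'a \<Rightarrow> bool" where
  "cyc_order4 H a b c d \<longleftrightarrow> (\<exists>s i j k l. i < j \<and> j < k \<and> k < l \<and> l < length H \<and>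
     a = H ! ((s + i) mod length H) \<and> b = H ! ((s + j) mod length H) \<and>
     c = H ! ((s + k) mod length H) \<and> d = H ! ((s + l) mod length H))"

end

theory Submission
  imports Defs
begin


lemma mod_cancel_lt:
  fixes n p t t' :: nat
  assumes "t < n" "t' < n" "(p + t) mod n = (p + t') mod n"
  shows "t = t'"
proof -
  have key: "a = b" if ab: "a \<le> b" "b < n" "(p + a) mod n = (p + b) mod n" for a b :: nat
  proof -
    have "n dvd (p + b) - (p + a)"
      using ab(1) ab(3) mod_eq_dvd_iff_nat[of "p + a" "p + b" n] by simp
    then have d: "n dvd b - a" by simp
    show "a = b"
    proof (rule ccontr)
      assume "a \<noteq> b"
      then have "0 < b - a" using ab(1) by simp
      then have "n \<le> b - a" using d dvd_imp_le by blast
      then show False using ab(2) by simp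
    qed
  qed
  show ?thesis
  proof (cases "t \<le> t'")
    case True then show ?thesis using key[of t t'] assms by simp
  next
    case False then show ?thesis using key[of t' t] assms by simp
  qed
qed

lemma mod_shift_iff:
  fixes n r i j :: nat
  assumes "i < n" "j < n"
  shows "((r + j) mod n = Suc ((r + i) mod n) mod n) \<longleftrightarrow> (j = Suc i mod n)"
proof -
  have e: "Suc ((r + i) mod n) mod n = (r + Suc i mod n) mod n"
    by (simp add: mod_Suc_eq mod_add_right_eq)
  have lt: "Suc i mod n < n" using assms by simp
  show ?thesis
  proof
    assume "(r + j) mod n = Suc ((r + i) mod n) mod n"
    then have "(r + j) mod n = (r + Suc i mod n) mod n" using e by simp
    then show "j = Suc i mod n" using mod_cancel_lt[OF assms(2) lt] by blast
  next
    assume "j = Suc i mod n"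
    then show "(r + j) mod n = Suc ((r + i) mod n) mod n" using e by simp
  qed
qed

lemma Suc_mod_cases: "k < n \<Longrightarrow> Suc k mod n = (if Suc k < n then Suc k else 0)"
proof (cases "Suc k < n")
  case False
  assume "k < n"
  then have "Suc k = n" using False by simp
  then show ?thesis by simp
qed simp

lemma hole_adj:
  "hole E L \<Longrightarrow> i < length L \<Longrightarrow> j < length L \<Longrightarrow>
   E (L!i) (L!j) \<longleftrightarrow> (j = Suc i mod length L \<or> i = Suc j mod length L)"
  unfolding hole_def by blast

lemma hole_rotate:
  assumes "hole E L" shows "hole E (rotate r L)"
proof -
  have L: "length L \<ge> 4" "distinct L" using assms unfolding hole_def by auto
  { fix i j assume ij: "i < length L" "j < length L"
    have pos: "0 < length L" using L(1) by linarith
    have a: "(r + i) mod length L < length L" "(r + j) mod length L < length L" using pos by simp_all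
    have "E (rotate r L ! i) (rotate r L ! j) \<longleftrightarrow>
          E (L ! ((r + i) mod length L)) (L ! ((r + j) mod length L))"
      using ij by (simp add: nth_rotate)
    also have "\<dots> \<longleftrightarrow> ((r + j) mod length L = Suc ((r + i) mod length L) mod length L \<or>
                     (r + i) mod length L = Suc ((r + j) mod length L) mod length L)"
      using hole_adj[OF assms a] .
    also have "\<dots> \<longleftrightarrow> (j = Suc i mod length L \<or> i = Suc j mod length L)"
      using mod_shift_iff[OF ij] mod_shift_iff[OF ij(2) ij(1)] by simp
    finally have "E (rotate r L ! i) (rotate r L ! j) \<longleftrightarrow> (j = Suc i mod length L \<or> i = Suc j mod length L)" .
  }
  then show ?thesis using L unfolding hole_def by simp
qed

lemma ipath_take:
  assumes "hole E L" "1 \<le> m" "m < length L"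
  shows "ipath E (take m L)"
proof -
  have L: "length L \<ge> 4" "distinct L" using assms unfolding hole_def by auto
  { fix i j assume ij: "i < m" "j < m"
    then have "E (L!i) (L!j) \<longleftrightarrow> (j = Suc i mod length L \<or> i = Suc j mod length L)"
      using hole_adj[OF assms(1)] assms by simp
    moreover have "Suc i mod length L = Suc i" "Suc j mod length L = Suc j" using ij assms by auto
    ultimately have "E (L!i) (L!j) \<longleftrightarrow> (i + 1 = j \<or> j + 1 = i)" by auto
  }
  then show ?thesis using L assms unfolding ipath_def
    by (auto simp: min_def)
qed

lemma drop_adj_aux:
  fixes n q i j :: nat
  assumes "1 \<le> q" "i < n - q" "j < n - q"
  shows "(q + j = Suc (q + i) mod n) \<longleftrightarrow> (i + 1 = j)"
proof (cases "Suc (q + i) < n")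
  case True
  then have "Suc (q + i) mod n = Suc (q + i)" by simp
  then show ?thesis by auto
next
  case False
  then have "Suc (q + i) = n" using assms by linarith
  then have m: "Suc (q + i) mod n = 0" by simp
  have "q + j \<noteq> 0" "i + 1 \<noteq> j" using assms False by linarith+
  then show ?thesis using m by simp
qed

lemma ipath_drop:
  assumes "hole E L" "1 \<le> q" "q < length L"
  shows "ipath E (drop q L)"
proof -
  have L: "length L \<ge> 4" "distinct L" using assms unfolding hole_def by auto
  { fix i j assume ij: "i < length L - q" "j < length L - q"
    then have "E (L!(q+i)) (L!(q+j)) \<longleftrightarrow> (q + j = Suc (q + i) mod length L \<or> q + i = Suc (q + j) mod length L)"
      using hole_adj[OF assms(1)] assms by simp
    also have "\<dots> \<longleftrightarrow> (i + 1 = j \<or> j + 1 = i)"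
      using drop_adj_aux[OF assms(2) ij] drop_adj_aux[OF assms(2) ij(2) ij(1)] by simp
    finally have "E (L!(q+i)) (L!(q+j)) \<longleftrightarrow> (i + 1 = j \<or> j + 1 = i)" .
  }
  then show ?thesis using L assms unfolding ipath_def
    by simp
qed

lemma ipath_rev:
  assumes "ipath E P" shows "ipath E (rev P)"
proof -
  { fix i j assume ij: "i < length P" "j < length P"
    have "E (rev P ! i) (rev P ! j) \<longleftrightarrow> E (P ! (length P - Suc i)) (P ! (length P - Suc j))"
      using ij by (simp add: rev_nth)
    also have "\<dots> \<longleftrightarrow> (length P - Suc i + 1 = length P - Suc j \<or> length P - Suc j + 1 = length P - Suc i)"
      using assms ij unfolding ipath_def by auto
    also have "\<dots> \<longleftrightarrow> (i + 1 = j \<or> j + 1 = i)" using ij by auto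
    finally have "E (rev P ! i) (rev P ! j) \<longleftrightarrow> (i + 1 = j \<or> j + 1 = i)" .
  }
  then show ?thesis using assms unfolding ipath_def by auto
qed

lemma SucSuc_mod: "j < m \<Longrightarrow> Suc (Suc j) mod Suc m = (if j = m - 1 then 0 else Suc (Suc j))"
proof (cases "j = m - 1")
  case True
  assume "j < m"
  then have "Suc (Suc j) = Suc m" using True by simp
  then show ?thesis using True by simp
next
  case False
  assume "j < m"
  then have "Suc (Suc j) < Suc m" using False by simp
  then show ?thesis using False by simp
qed

lemma hole_cons:
  assumes sym: "\<forall>x y. E x y \<longrightarrow> E y x" and irr: "\<forall>x. \<not> E x x"
    and P: "ipath E P" "length P \<ge> 3" "w \<notin> set P"
    and adj: "\<forall>q\<in>set P. E w q \<longleftrightarrow> (q = hd P \<or> q = last P)"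
  shows "hole E (w # P)"
proof -
  let ?m = "length P"
  have dP: "distinct P" "P \<noteq> []" using P unfolding ipath_def by auto
  have hdl: "hd P = P ! 0" "last P = P ! (?m - 1)" using dP by (auto simp: hd_conv_nth last_conv_nth)
  have adjP: "E (P!i) (P!j) \<longleftrightarrow> (i + 1 = j \<or> j + 1 = i)" if "i < ?m" "j < ?m" for i j
    using P that unfolding ipath_def by auto
  have wj: "E w (P!j) \<longleftrightarrow> (j = 0 \<or> j = ?m - 1)" if "j < ?m" for j
  proof -
    have "E w (P!j) \<longleftrightarrow> (P!j = P!0 \<or> P!j = P!(?m - 1))" using adj that hdl by auto
    also have "\<dots> \<longleftrightarrow> (j = 0 \<or> j = ?m - 1)" using dP that P(2) by (auto simp: nth_eq_iff_index_eq)
    finally show ?thesis .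
  qed
  { fix i j assume ij: "i < Suc ?m" "j < Suc ?m"
    have "Suc 0 < Suc ?m" using P(2) by linarith
    then have m1: "Suc 0 mod Suc ?m = 1" by (simp only: mod_less)
    have "E ((w#P)!i) ((w#P)!j) \<longleftrightarrow> (j = Suc i mod Suc ?m \<or> i = Suc j mod Suc ?m)"
    proof (cases i)
      case 0
      show ?thesis
      proof (cases j)
        case 0 then show ?thesis using \<open>i = 0\<close> irr m1 by simp
      next
        case (Suc j')
        have "E w (P!j') \<longleftrightarrow> (j' = 0 \<or> j' = ?m - 1)" using wj ij Suc by simp
        moreover have "Suc (Suc j') mod Suc ?m = (if j' = ?m - 1 then 0 else Suc (Suc j'))"
          using ij Suc SucSuc_mod by simp
        ultimately show ?thesis using \<open>i = 0\<close> Suc m1 by auto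
      qed
    next
      case (Suc i')
      show ?thesis
      proof (cases j)
        case 0
        have "E w (P!i') \<longleftrightarrow> (i' = 0 \<or> i' = ?m - 1)" using wj ij Suc by simp
        moreover have "E (P!i') w \<longleftrightarrow> E w (P!i')" using sym by blast
        moreover have "Suc (Suc i') mod Suc ?m = (if i' = ?m - 1 then 0 else Suc (Suc i'))"
          using ij Suc SucSuc_mod by simp
        ultimately show ?thesis using 0 Suc m1 by auto
      next
        case (Suc j')
        have "E (P!i') (P!j') \<longleftrightarrow> (i' + 1 = j' \<or> j' + 1 = i')" using adjP ij Suc \<open>i = Suc i'\<close> by simp
        moreover have "Suc (Suc i') mod Suc ?m = (if i' = ?m - 1 then 0 else Suc (Suc i'))"
          using ij \<open>i = Suc i'\<close> SucSuc_mod by simp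
        moreover have "Suc (Suc j') mod Suc ?m = (if j' = ?m - 1 then 0 else Suc (Suc j'))"
          using ij Suc SucSuc_mod by simp
        ultimately show ?thesis using Suc \<open>i = Suc i'\<close> ij by auto
      qed
    qed
  }
  then have A: "\<forall>i j. i < length (w#P) \<longrightarrow> j < length (w#P) \<longrightarrow>
      (E ((w#P)!i) ((w#P)!j) \<longleftrightarrow> (j = Suc i mod length (w#P) \<or> i = Suc j mod length (w#P)))"
    by (simp only: length_Cons) blast
  have B: "4 \<le> length (w#P)" using P(2) by simp
  have C: "distinct (w#P)" using P(3) dP(1) by simp
  show ?thesis unfolding hole_def using A B C by blast
qed

lemma hole4:
  assumes irr: "\<forall>x. \<not> E x x" and sym: "\<forall>x y. E x y \<longrightarrow> E y x"
    and "distinct [a,b,c,d]" "E a b" "E b c" "E c d" "E d a" "\<not> E a c" "\<not> E b d"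
  shows "hole E [a,b,c,d]"
proof -
  have s: "E b a" "E c b" "E d c" "E a d" "\<not> E c a" "\<not> E d b" using assms by blast+
  have ir: "\<not> E a a" "\<not> E b b" "\<not> E c c" "\<not> E d d" using irr by blast+
  have "\<forall>i j. i < 4 \<longrightarrow> j < 4 \<longrightarrow>
        (E ([a,b,c,d]!i) ([a,b,c,d]!j) \<longleftrightarrow> (j = Suc i mod 4 \<or> i = Suc j mod 4))"
  proof (intro allI impI)
    fix i j :: nat assume "i < 4" "j < 4"
    then have "i = 0 \<or> i = 1 \<or> i = 2 \<or> i = 3" "j = 0 \<or> j = 1 \<or> j = 2 \<or> j = 3" by auto
    then show "E ([a,b,c,d]!i) ([a,b,c,d]!j) \<longleftrightarrow> (j = Suc i mod 4 \<or> i = Suc j mod 4)"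
      using assms(4-9) s ir by (elim disjE) simp_all
  qed
  then show ?thesis using assms unfolding hole_def by simp
qed

lemma ipath3:
  assumes irr: "\<forall>x. \<not> E x x" and sym: "\<forall>x y. E x y \<longrightarrow> E y x"
    and "distinct [a,b,c]" "E a b" "E b c" "\<not> E a c"
  shows "ipath E [a,b,c]"
proof -
  have s: "E b a" "E c b" "\<not> E c a" using assms by blast+
  have ir: "\<not> E a a" "\<not> E b b" "\<not> E c c" using irr by blast+
  have "\<forall>i j. i < 3 \<longrightarrow> j < 3 \<longrightarrow>
        (E ([a,b,c]!i) ([a,b,c]!j) \<longleftrightarrow> (i + 1 = j \<or> j + 1 = i))"
  proof (intro allI impI)
    fix i j :: nat assume "i < 3" "j < 3"
    then have "i = 0 \<or> i = 1 \<or> i = 2" "j = 0 \<or> j = 1 \<or> j = 2" by auto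
    then show "E ([a,b,c]!i) ([a,b,c]!j) \<longleftrightarrow> (i + 1 = j \<or> j + 1 = i)"
      using assms(4-6) s ir by (elim disjE) simp_all
  qed
  then show ?thesis using assms unfolding ipath_def by simp
qed

lemma ipath2:
  assumes irr: "\<forall>x. \<not> E x x" and sym: "\<forall>x y. E x y \<longrightarrow> E y x"
    and "a \<noteq> b" "E a b"
  shows "ipath E [a,b]"
proof -
  have "\<forall>i j. i < 2 \<longrightarrow> j < 2 \<longrightarrow>
        (E ([a,b]!i) ([a,b]!j) \<longleftrightarrow> (i + 1 = j \<or> j + 1 = i))"
  proof (intro allI impI)
    fix i j :: nat assume "i < 2" "j < 2"
    then have "i = 0 \<or> i = 1" "j = 0 \<or> j = 1" by auto
    moreover have "\<not> E a a" "\<not> E b b" "E b a" using assms by blast+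
    ultimately show "E ([a,b]!i) ([a,b]!j) \<longleftrightarrow> (i + 1 = j \<or> j + 1 = i)"
      using assms(4) by (elim disjE) simp_all
  qed
  then show ?thesis using assms unfolding ipath_def by simp
qed



lemma graph_sym_irr: "graph V E \<Longrightarrow> (\<forall>x y. E x y \<longrightarrow> E y x) \<and> (\<forall>x. \<not> E x x)"
  unfolding graph_def by blast

lemma nbrs_iff: "e \<in> set L \<Longrightarrow> (E u e \<longleftrightarrow> e \<in> nbrs_in E L u)"
  by (simp add: nbrs_in_def)

lemma nbrs_E: "e \<in> nbrs_in E L u \<Longrightarrow> E u e"
  by (simp add: nbrs_in_def)

lemma nbrs_sub: "nbrs_in E L u \<subseteq> set L"
  by (auto simp add: nbrs_in_def)

lemma nth_in_take_iff:
  assumes "distinct L" "k < length L"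
  shows "L!k \<in> set (take m L) \<longleftrightarrow> k < m"
proof
  assume "L!k \<in> set (take m L)"
  then obtain k' where k': "k' < length (take m L)" "take m L ! k' = L!k"
    by (auto simp: in_set_conv_nth)
  then have "k' < m" "k' < length L" "L!k' = L!k" by auto
  then have "k' = k" using assms nth_eq_iff_index_eq by blast
  then show "k < m" using \<open>k' < m\<close> by simp
next
  assume "k < m"
  then have "take m L ! k = L!k" "k < length (take m L)" using assms by auto
  then show "L!k \<in> set (take m L)" by (metis nth_mem)
qed

lemma nth_in_drop_iff:
  assumes "distinct L" "k < length L"
  shows "L!k \<in> set (drop m L) \<longleftrightarrow> m \<le> k"
proof
  assume "L!k \<in> set (drop m L)"
  then obtain t where t: "t < length (drop m L)" "drop m L ! t = L!k"
    by (auto simp: in_set_conv_nth)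
  then have "m + t < length L" "L!(m+t) = L!k" by auto
  then have "m + t = k" using assms nth_eq_iff_index_eq by blast
  then show "m \<le> k" by simp
next
  assume "m \<le> k"
  then have "drop m L ! (k - m) = L!k" "k - m < length (drop m L)" using assms by auto
  then show "L!k \<in> set (drop m L)" by (metis nth_mem)
qed

lemma induces_hole_I: "hole E xs \<Longrightarrow> set xs = S \<Longrightarrow> induces_hole E S"
  unfolding induces_hole_def by blast

lemma theta_indep:
  assumes g: "graph V E" and uv: "u \<in> V" "v \<in> V" "u \<noteq> v" "\<not> E u v"
    and xyz: "x \<in> V" "y \<in> V" "z \<in> V" "distinct [x,y,z]"
    and adj: "E u x" "E u y" "E u z" "E v x" "E v y" "E v z"
    and nadj: "\<not> E x y" "\<not> E x z" "\<not> E y z"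
  shows "has_theta V E"
proof -
  have sym: "\<forall>x y. E x y \<longrightarrow> E y x" using graph_sym_irr[OF g] by (rule conjunct1)
  have irr: "\<forall>x. \<not> E x x" using graph_sym_irr[OF g] by (rule conjunct2)
  have ne: "u \<noteq> x" "u \<noteq> y" "u \<noteq> z" "v \<noteq> x" "v \<noteq> y" "v \<noteq> z"
    using adj irr by metis+
  have s: "E x u" "E y u" "E z u" "E x v" "E y v" "E z v" "\<not> E y x" "\<not> E z x" "\<not> E z y"
    using adj nadj sym by blast+
  have p: "path_from_to V E [u,t,v] u v" if "t \<in> V" "E u t" "E t v" "u \<noteq> t" "t \<noteq> v" for t
    unfolding path_from_to_def using that uv ipath3[OF irr sym, of u t v] by simp
  have h: "induces_hole E (set [u,s,v] \<union> set [u,t,v])"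
    if "E u s" "E s v" "E v t" "E t u" "\<not> E s t" "distinct [u,s,v,t]" for s t
  proof (rule induces_hole_I[of E "[u,s,v,t]"])
    show "hole E [u,s,v,t]" using hole4[OF irr sym, of u s v t] that uv by simp
  qed auto
  show ?thesis unfolding has_theta_def
    apply (rule exI[of _ u], rule exI[of _ v], rule exI[of _ "[u,x,v]"], rule exI[of _ "[u,y,v]"],
           rule exI[of _ "[u,z,v]"])
    using uv xyz ne adj s nadj p h by auto
qed



lemma last_take_nth:
  assumes "0 < m" "m \<le> length L" shows "last (take m L) = L!(m-1)"
proof -
  have ne: "take m L \<noteq> []" using assms by (cases L) auto
  have "length (take m L) = m" using assms by simp
  then show ?thesis using last_conv_nth[OF ne] assms by simp
qed

lemma hd_nth0: "0 < length L \<Longrightarrow> hd L = L!0"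
  by (cases L) auto

lemma theta_clone:
  assumes g: "graph V E" and hL: "hole E L" "set L \<subseteq> V"
    and uv: "u \<in> V" "v \<in> V" "u \<notin> set L" "v \<notin> set L" "u \<noteq> v" "\<not> E u v"
    and nu: "nbrs_in E L u = {L!(length L - 2), L!(length L - 1), L!0}"
    and nv: "nbrs_in E L v = {L!(length L - 2), L!(length L - 1), L!0}"
  shows "has_theta V E"
proof -
  have sym: "\<forall>x y. E x y \<longrightarrow> E y x" using graph_sym_irr[OF g] by (rule conjunct1)
  have irr: "\<forall>x. \<not> E x x" using graph_sym_irr[OF g] by (rule conjunct2)
  define n where "n = length L"
  have n4: "n \<ge> 4" and dL: "distinct L" using hL unfolding hole_def n_def by auto
  define x where "x = L!(n-2)"
  define y where "y = L!(n-1)"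
  define z where "z = L!0"
  define P3 where "P3 = take (n-1) L"
  have idx: "n-2 < length L" "n-1 < length L" "0 < length L" using n4 n_def by linarith+
  have inL: "x \<in> set L" "y \<in> set L" "z \<in> set L" unfolding x_def y_def z_def
    by (rule nth_mem[OF idx(1)], rule nth_mem[OF idx(2)], rule nth_mem[OF idx(3)])
  have dxyz: "x \<noteq> y" "x \<noteq> z" "y \<noteq> z" unfolding x_def y_def z_def using n4 n_def dL idx
    by (auto simp: nth_eq_iff_index_eq)
  have Eu: "E u e \<longleftrightarrow> e = x \<or> e = y \<or> e = z" if "e \<in> set L" for e
    using nbrs_iff[OF that, of E u] nu unfolding x_def y_def z_def n_def by auto
  have Ev: "E v e \<longleftrightarrow> e = x \<or> e = y \<or> e = z" if "e \<in> set L" for e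
    using nbrs_iff[OF that, of E v] nv unfolding x_def y_def z_def n_def by auto
  have nzx: "\<not> E z x"
  proof -
    have "E z x \<longleftrightarrow> (n - 2 = Suc 0 mod n \<or> 0 = Suc (n - 2) mod n)"
      unfolding z_def x_def using hole_adj[OF hL(1), of 0 "n-2"] n4 n_def idx by simp
    moreover have "Suc 0 mod n = 1" "Suc (n-2) mod n = n - 1" using n4 by auto
    ultimately show ?thesis using n4 by simp
  qed
  have eq2: "length L - Suc (Suc 0) = length L - 2" by arith
  have P3: "ipath E P3" "length P3 = n - 1" "hd P3 = z" "last P3 = x" "set P3 \<subseteq> set L"
    unfolding P3_def
    using ipath_take[OF hL(1), of "n-1"] n4 n_def
    by (auto simp: z_def x_def last_take_nth hd_nth0 set_take_subset eq2)
  have zx3: "z \<in> set P3" "x \<in> set P3" "y \<notin> set P3"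
    unfolding P3_def z_def x_def y_def using nth_in_take_iff[OF dL] n4 n_def idx by auto
  have uE: "E u x" "E u y" "E u z" "E v x" "E v y" "E v z" using Eu Ev inL by auto
  have uE': "E x u" "E z u" "E x v" "E z v" using uE sym by blast+
  have p1: "path_from_to V E [z,t,x] z x" if "t \<in> V" "t \<notin> set L" "E z t" "E t x" for t
  proof -
    have "ipath E [z,t,x]" using ipath3[OF irr sym, of z t x] that dxyz inL nzx by auto
    then show ?thesis unfolding path_from_to_def using that hL(2) inL by auto
  qed
  have p3: "path_from_to V E P3 z x"
    unfolding path_from_to_def using P3 hL(2) by auto
  have h12: "induces_hole E (set [z,u,x] \<union> set [z,v,x])"
  proof (rule induces_hole_I[of E "[z,u,x,v]"])
    show "hole E [z,u,x,v]" using hole4[OF irr sym, of z u x v] uE uE' uv nzx dxyz inL by auto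
  qed auto
  have h3: "induces_hole E (set [z,t,x] \<union> set P3)"
    if "t \<notin> set L" "\<forall>e\<in>set L. E t e \<longleftrightarrow> e = x \<or> e = y \<or> e = z" for t
  proof (rule induces_hole_I[of E "t # P3"])
    have "\<forall>e\<in>set P3. E t e \<longleftrightarrow> (e = hd P3 \<or> e = last P3)"
      using that P3 zx3 by auto
    moreover have "3 \<le> length P3" using P3(2) n4 by simp
    moreover have "t \<notin> set P3" using P3(5) that(1) by blast
    ultimately show "hole E (t # P3)" using hole_cons[OF sym irr P3(1)] by blast
    show "set (t # P3) = set [z, t, x] \<union> set P3" using zx3 by auto
  qed
  have h13: "induces_hole E (set [z,u,x] \<union> set P3)" using h3 uv Eu by blast
  have h23: "induces_hole E (set [z,v,x] \<union> set P3)" using h3 uv Ev by blast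
  have i1: "set [z,u,x] \<inter> set [z,v,x] = {z,x}" using uv inL by auto
  have i2: "set [z,t,x] \<inter> set P3 = {z,x}" if "t \<notin> set L" for t using that zx3 P3 by auto
  show ?thesis unfolding has_theta_def
    apply (rule exI[of _ z], rule exI[of _ x], rule exI[of _ "[z,u,x]"], rule exI[of _ "[z,v,x]"],
           rule exI[of _ P3])
  proof (intro conjI)
    show "z \<noteq> x" using dxyz by simp
    show "\<not> E z x" by (rule nzx)
    show "path_from_to V E [z,u,x] z x" using p1 uv uE uE' by blast
    show "path_from_to V E [z,v,x] z x" using p1 uv uE uE' by blast
    show "path_from_to V E P3 z x" by (rule p3)
    show "set [z,u,x] \<inter> set [z,v,x] = {z,x}" by (rule i1)
    show "set [z,u,x] \<inter> set P3 = {z,x}" using i2 uv by blast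
    show "set [z,v,x] \<inter> set P3 = {z,x}" using i2 uv by blast
    show "induces_hole E (set [z,u,x] \<union> set [z,v,x])" by (rule h12)
    show "induces_hole E (set [z,u,x] \<union> set P3)" by (rule h13)
    show "induces_hole E (set [z,v,x] \<union> set P3)" by (rule h23)
  qed
qed

lemma pyramid_lem:
  assumes g: "graph V E" and hL: "hole E L" "set L \<subseteq> V"
    and u: "u \<in> V" "u \<notin> set L"
    and nu: "nbrs_in E L u = {L!0, L!(length L - 1), L!q}"
    and q: "2 \<le> q" "q + 3 \<le> length L"
  shows "has_pyramid V E"
proof -
  have sym: "\<forall>x y. E x y \<longrightarrow> E y x" using graph_sym_irr[OF g] by (rule conjunct1)
  have irr: "\<forall>x. \<not> E x x" using graph_sym_irr[OF g] by (rule conjunct2)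
  define n where "n = length L"
  have n4: "n \<ge> 4" and dL: "distinct L" using hL unfolding hole_def n_def by auto
  define x where "x = L!(n-1)"
  define y where "y = L!0"
  define w where "w = L!q"
  define T where "T = take (q+1) L"
  define D where "D = drop q L"
  have idx: "n-1 < length L" "0 < length L" "q < length L" using n4 n_def q by linarith+
  have inL: "x \<in> set L" "y \<in> set L" "w \<in> set L" unfolding x_def y_def w_def
    by (rule nth_mem[OF idx(1)], rule nth_mem[OF idx(2)], rule nth_mem[OF idx(3)])
  have dxyw: "x \<noteq> y" "x \<noteq> w" "y \<noteq> w" unfolding x_def y_def w_def using n4 n_def dL q idx
    by (auto simp: nth_eq_iff_index_eq)
  have Eu: "E u e \<longleftrightarrow> e = y \<or> e = x \<or> e = w" if "e \<in> set L" for e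
    using nbrs_iff[OF that, of E u] nu unfolding x_def y_def w_def n_def by auto
  have Eyx: "E y x"
  proof -
    have "E y x \<longleftrightarrow> (n - 1 = Suc 0 mod n \<or> 0 = Suc (n - 1) mod n)"
      unfolding y_def x_def using hole_adj[OF hL(1), of 0 "n-1"] n4 n_def idx by simp
    moreover have "Suc (n-1) mod n = 0" using n4 by simp
    ultimately show ?thesis by simp
  qed
  have uE: "E u x" "E u y" "E u w" "E w u" using Eu inL sym by auto
  have T: "ipath E T" "length T = q + 1" "hd T = y" "last T = w" "set T \<subseteq> set L"
    unfolding T_def
    using ipath_take[OF hL(1), of "q+1"] n4 n_def q
    by (auto simp: y_def w_def last_take_nth hd_nth0 set_take_subset)
  have D: "ipath E D" "length D = n - q" "hd D = w" "last D = x" "set D \<subseteq> set L"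
    unfolding D_def
    using ipath_drop[OF hL(1), of q] n4 n_def q
    by (auto simp: x_def w_def hd_drop_conv_nth last_conv_nth set_drop_subset)
  have memT: "y \<in> set T" "w \<in> set T" "x \<notin> set T"
    unfolding T_def y_def w_def x_def using nth_in_take_iff[OF dL] n4 n_def q idx by auto
  have memD: "x \<in> set D" "w \<in> set D" "y \<notin> set D"
    unfolding D_def y_def w_def x_def using nth_in_drop_iff[OF dL] n4 n_def q idx by auto
  have TD: "set T \<inter> set D = {w}"
  proof -
    have "e = w" if "e \<in> set T" "e \<in> set D" for e
    proof -
      have "e \<in> set L" using that(1) T(5) by blast
      then obtain k where k: "k < n" "e = L!k" by (auto simp: in_set_conv_nth n_def)
      have "k < q + 1" using that(1) nth_in_take_iff[OF dL, of k] k n_def unfolding T_def by simp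
      moreover have "q \<le> k" using that(2) nth_in_drop_iff[OF dL, of k] k n_def unfolding D_def by simp
      ultimately have "k = q" by simp
      then show ?thesis using k w_def by simp
    qed
    then show ?thesis using memT(2) memD(2) by blast
  qed
  have TDu: "set T \<union> set D = set L"
  proof
    show "set T \<union> set D \<subseteq> set L" using T(5) D(5) by blast
    show "set L \<subseteq> set T \<union> set D"
    proof
      fix e assume "e \<in> set L"
      then obtain k where k: "k < n" "e = L!k" by (auto simp: in_set_conv_nth n_def)
      show "e \<in> set T \<union> set D"
        using nth_in_take_iff[OF dL, of k "q+1"] nth_in_drop_iff[OF dL, of k q] k n_def
        unfolding T_def D_def by (cases "k < q + 1") auto
    qed
  qed
  have tri: "triangle E u y x" unfolding triangle_def using uE Eyx u inL dxyw by auto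
  have p1: "path_from_to V E [w,u] w u"
    unfolding path_from_to_def using ipath2[OF irr sym, of w u] uE u inL hL(2) by auto
  have p2: "path_from_to V E (rev T) w y"
    unfolding path_from_to_def using ipath_rev[OF T(1)] T hL(2) by (auto simp: hd_rev last_rev)
  have p3: "path_from_to V E D w x"
    unfolding path_from_to_def using D hL(2) by auto
  have h12: "induces_hole E (set [w,u] \<union> set (rev T))"
  proof (rule induces_hole_I[of E "u # T"])
    have "\<forall>e\<in>set T. E u e \<longleftrightarrow> (e = hd T \<or> e = last T)"
      using T memT Eu by auto
    moreover have "3 \<le> length T" using T(2) q by simp
    moreover have "u \<notin> set T" using T(5) u(2) by blast
    ultimately show "hole E (u # T)" using hole_cons[OF sym irr T(1)] by blast
    show "set (u # T) = set [w,u] \<union> set (rev T)" using memT by auto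
  qed
  have h13: "induces_hole E (set [w,u] \<union> set D)"
  proof (rule induces_hole_I[of E "u # D"])
    have "\<forall>e\<in>set D. E u e \<longleftrightarrow> (e = hd D \<or> e = last D)"
      using D memD Eu by auto
    moreover have "3 \<le> length D" using D(2) q n_def by simp
    moreover have "u \<notin> set D" using D(5) u(2) by blast
    ultimately show "hole E (u # D)" using hole_cons[OF sym irr D(1)] by blast
    show "set (u # D) = set [w,u] \<union> set D" using memD by auto
  qed
  have h23: "induces_hole E (set (rev T) \<union> set D)"
    using induces_hole_I[OF hL(1)] TDu by simp
  have i12: "set [w,u] \<inter> set (rev T) = {w}" using memT T u by auto
  have i13: "set [w,u] \<inter> set D = {w}" using memD D u by auto
  have i23: "set (rev T) \<inter> set D = {w}" using TD by simp
  show ?thesis unfolding has_pyramid_def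
    apply (rule exI[of _ w], rule exI[of _ u], rule exI[of _ y], rule exI[of _ x],
           rule exI[of _ "[w,u]"], rule exI[of _ "rev T"], rule exI[of _ D])
    by (intro conjI; fact)
qed



definition NEST :: "'a list \<Rightarrow> 'a set \<Rightarrow> 'a set \<Rightarrow> bool" where
  "NEST H A B \<longleftrightarrow> (\<exists>i j. i < length H \<and> j < length H \<and> i \<noteq> j \<and> A \<subseteq> arc H i j \<and> B \<subseteq> arc H j i)"

definition ALT :: "'a list \<Rightarrow> 'a set \<Rightarrow> 'a set \<Rightarrow> bool" where
  "ALT H A B \<longleftrightarrow> (\<exists>u' v' u'' v''. distinct [u', v', u'', v''] \<and> cyc_order4 H u' v' u'' v'' \<and>
            u' \<in> A \<and> u'' \<in> A \<and> v' \<in> B \<and> v'' \<in> B)"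

lemma set_nth_ex: "e \<in> set H \<Longrightarrow> \<exists>m<length H. e = H!m" by (metis in_set_conv_nth)

lemma arc_mem: "k \<le> (j + length H - i) mod length H \<Longrightarrow> H ! ((i + k) mod length H) \<in> arc H i j"
  unfolding arc_def by blast

lemma arc_start: "i < length H \<Longrightarrow> H ! i \<in> arc H i j"
  using arc_mem[of 0 j H i] by simp

lemma arc_end:
  assumes "i < length H" "j < length H" shows "H ! j \<in> arc H i j"
proof -
  let ?n = "length H"
  have "(i + (j + ?n - i) mod ?n) mod ?n = (i + (j + ?n - i)) mod ?n" by (simp add: mod_add_right_eq)
  also have "i + (j + ?n - i) = j + ?n" using assms by simp
  also have "(j + ?n) mod ?n = j" using assms by simp
  finally show ?thesis using arc_mem[of "(j + ?n - i) mod ?n" j H i] by simp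
qed

lemma arc_shift:
  assumes "0 < n" "n = length H" "d < n" "k \<le> d"
  shows "H ! ((a + k) mod n) \<in> arc H (a mod n) ((a + d) mod n)"
proof -
  define x where "x = a mod n"
  have x: "x < n" using assms x_def by simp
  have e1: "(a + d) mod n = (x + d) mod n" unfolding x_def by (simp add: mod_add_left_eq)
  have e2: "((x + d) mod n + n - x) mod n = d"
  proof (cases "x + d < n")
    case True
    then have "(x + d) mod n + n - x = d + n" by simp
    then show ?thesis using assms by simp
  next
    case False
    then have "(x + d) mod n = x + d - n"
      using x assms by (simp add: mod_if)
    then have "(x + d) mod n + n - x = d" using False by simp
    then show ?thesis using assms by simp
  qed
  have e3: "(x + k) mod n = (a + k) mod n" unfolding x_def by (simp add: mod_add_left_eq)
  show ?thesis using arc_mem[of k "(a + d) mod n" H x] e1 e2 e3 assms x_def by simp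
qed

lemma arc_full:
  assumes "j < length H" "e \<in> set H"
  shows "e \<in> arc H (Suc j mod length H) j"
proof -
  let ?n = "length H"
  define i where "i = Suc j mod ?n"
  have n0: "0 < ?n" using assms by auto
  have i: "i < ?n" using n0 i_def by simp
  obtain m where m: "m < ?n" "e = H ! m" using set_nth_ex[OF assms(2)] by blast
  define k where "k = (m + ?n - i) mod ?n"
  have "(j + ?n - i) mod ?n = ?n - 1"
  proof (cases "Suc j < ?n")
    case True
    then have "i = Suc j" using i_def by simp
    then have "j + ?n - i = ?n - 1" by simp
    then show ?thesis using n0 by simp
  next
    case False
    then have "Suc j = ?n" using assms by simp
    then have "i = 0" using i_def by simp
    then show ?thesis using \<open>Suc j = ?n\<close> by simp
  qed
  moreover have "k \<le> ?n - 1" unfolding k_def using mod_less_divisor[OF n0, of "m + ?n - i"] by linarith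
  moreover have "(i + k) mod ?n = m"
  proof -
    have "(i + k) mod ?n = (i + (m + ?n - i)) mod ?n" unfolding k_def by (simp add: mod_add_right_eq)
    also have "i + (m + ?n - i) = m + ?n" using i by simp
    finally show ?thesis using m by simp
  qed
  ultimately show ?thesis using arc_mem[of k j H i] m i_def by simp
qed

lemma Suc_mod_neq: assumes "2 \<le> n" "j < n" shows "Suc j mod n \<noteq> j"
proof (cases "Suc j < n")
  case False
  then have "Suc j = n" using assms by simp
  then show ?thesis using assms by auto
qed simp

lemma NEST_sym: "NEST H B A \<Longrightarrow> NEST H A B"
  unfolding NEST_def by blast

lemma cyc_rot: "cyc_order4 H a b c d \<Longrightarrow> cyc_order4 H b c d a"
proof -
  assume "cyc_order4 H a b c d"
  then obtain s i j k l where h: "i < j" "j < k" "k < l" "l < length H"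
    "a = H ! ((s + i) mod length H)" "b = H ! ((s + j) mod length H)"
    "c = H ! ((s + k) mod length H)" "d = H ! ((s + l) mod length H)"
    unfolding cyc_order4_def by blast
  let ?n = "length H"
  have "(s + j + (?n + i - j)) mod ?n = (s + i) mod ?n"
  proof -
    have "s + j + (?n + i - j) = (s + i) + ?n" using h by simp
    then show ?thesis by (metis mod_add_self2)
  qed
  moreover have "s + j + (k - j) = s + k" "s + j + (l - j) = s + l" using h by auto
  moreover have "0 < k - j" "k - j < l - j" "l - j < ?n + i - j" "?n + i - j < ?n" using h by auto
  ultimately show "cyc_order4 H b c d a" unfolding cyc_order4_def
    using h by (intro exI[of _ "s + j"] exI[of _ 0] exI[of _ "k - j"] exI[of _ "l - j"] exI[of _ "?n + i - j"]) simp
qed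

lemma ALT_sym: "ALT H B A \<Longrightarrow> ALT H A B"
proof -
  assume "ALT H B A"
  then obtain a b c d where h: "distinct [a,b,c,d]" "cyc_order4 H a b c d" "a \<in> B" "c \<in> B" "b \<in> A" "d \<in> A"
    unfolding ALT_def by blast
  have "cyc_order4 H b c d a" using cyc_rot[OF h(2)] .
  moreover have "distinct [b,c,d,a]" using h(1) by auto
  ultimately show "ALT H A B" unfolding ALT_def using h by blast
qed

lemma comb1:
  assumes dH: "distinct H" and n2: "2 \<le> length H" and AH: "A \<subseteq> set H" and BH: "B \<subseteq> set H"
    and a: "a \<in> A" "a \<notin> B"
  shows "NEST H A B \<or> ALT H A B"
proof -
  define n where "n = length H"
  have n0: "0 < n" using n2 n_def by linarith
  have "a \<in> set H" using a AH by blast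
  then obtain p where p0: "p < length H" "a = H ! p" using set_nth_ex[of a H] by blast
  have p: "p < n" "H ! p = a" using p0 n_def by simp_all
  define g where "g t = H ! ((p + t) mod n)" for t
  have rep: "\<exists>t<n. e = g t" if he: "e \<in> set H" for e
  proof -
    obtain m where m: "m < n" "e = H ! m" using set_nth_ex[OF he] n_def by blast
    have "(p + (m + n - p) mod n) mod n = (p + (m + n - p)) mod n" by (simp add: mod_add_right_eq)
    also have "p + (m + n - p) = m + n" using p by simp
    finally have "(p + (m + n - p) mod n) mod n = m" using m by simp
    then show ?thesis using m n0 unfolding g_def by (intro exI[of _ "(m + n - p) mod n"]) simp
  qed
  have inj: "t = t'" if "t < n" "t' < n" "g t = g t'" for t t'
  proof -
    have "(p + t) mod n = (p + t') mod n"
      using that dH n0 unfolding g_def n_def by (simp add: nth_eq_iff_index_eq)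
    then show ?thesis using mod_cancel_lt that by blast
  qed
  have g0: "g 0 = a" unfolding g_def using p by simp
  show ?thesis
  proof (cases "B = {}")
    case True
    have "A \<subseteq> arc H (Suc p mod n) p" using AH arc_full[of p H] p n_def by blast
    moreover have "Suc p mod n \<noteq> p" using Suc_mod_neq n2 p n_def by simp
    ultimately have "NEST H A B" unfolding NEST_def using True p n0 n_def
      by (intro exI[of _ "Suc p mod n"] exI[of _ p]) simp
    then show ?thesis by simp
  next
    case False
    define IB where "IB = {t. t < n \<and> g t \<in> B}"
    have fin: "finite IB" unfolding IB_def by simp
    have ne: "IB \<noteq> {}"
    proof -
      obtain b where "b \<in> B" using False by blast
      then obtain t where "t < n" "b = g t" using rep BH by blast
      then show ?thesis unfolding IB_def using \<open>b \<in> B\<close> by blast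
    qed
    define bmin where "bmin = Min IB"
    define bmax where "bmax = Max IB"
    have bmin: "bmin \<in> IB" "\<forall>t\<in>IB. bmin \<le> t" unfolding bmin_def using fin ne by auto
    have bmax: "bmax \<in> IB" "\<forall>t\<in>IB. t \<le> bmax" unfolding bmax_def using fin ne by auto
    have B_IB: "\<exists>t\<in>IB. e = g t" if "e \<in> B" for e
      using rep[of e] that BH unfolding IB_def by blast
    have b0: "0 < bmin"
    proof (rule ccontr)
      assume "\<not> 0 < bmin"
      then have "bmin = 0" by simp
      then have "g 0 \<in> B" using bmin unfolding IB_def by simp
      then show False using g0 a by simp
    qed
    have bltn: "bmax < n" "bmin \<le> bmax" using bmax bmin unfolding IB_def by auto
    show ?thesis
    proof (cases "\<exists>t. bmin < t \<and> t < bmax \<and> g t \<in> A")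
      case True
      then obtain t where t: "bmin < t" "t < bmax" "g t \<in> A" by blast
      have "cyc_order4 H (g 0) (g bmin) (g t) (g bmax)"
        unfolding cyc_order4_def g_def n_def
        using b0 t bltn n_def by (intro exI[of _ p] exI[of _ 0] exI[of _ bmin] exI[of _ t] exI[of _ bmax]) simp
      moreover have "distinct [g 0, g bmin, g t, g bmax]"
      proof -
        have ne: "g x \<noteq> g y" if xy: "x < y" "y < n" for x y
        proof
          assume "g x = g y"
          moreover have "x < n" using xy by linarith
          ultimately have "x = y" using inj xy(2) by blast
          then show False using xy(1) by simp
        qed
        have f: "0 < t" "0 < bmax" "bmin < bmax" "bmin < n" "t < n" using b0 t bltn by linarith+
        have "g 0 \<noteq> g bmin" "g 0 \<noteq> g t" "g 0 \<noteq> g bmax" "g bmin \<noteq> g t" "g bmin \<noteq> g bmax" "g t \<noteq> g bmax"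
          using ne[OF b0 f(4)] ne[OF f(1) f(5)] ne[OF f(2) bltn(1)] ne[OF t(1) f(5)] ne[OF f(3) bltn(1)] ne[OF t(2) bltn(1)]
          by auto
        then show ?thesis by simp
      qed
      moreover have "g 0 \<in> A" "g bmin \<in> B" "g bmax \<in> B" using g0 a bmin bmax unfolding IB_def by auto
      ultimately have "ALT H A B" unfolding ALT_def using t by blast
      then show ?thesis by simp
    next
      case noA: False
      have Arep: "\<exists>t<n. e = g t \<and> (t \<le> bmin \<or> bmax \<le> t)" if eA: "e \<in> A" for e
      proof -
        have "e \<in> set H" using eA AH by blast
        then obtain t where t: "t < n" "e = g t" using rep by blast
        have "t \<le> bmin \<or> bmax \<le> t"
        proof (rule ccontr)
          assume "\<not> (t \<le> bmin \<or> bmax \<le> t)"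
          then have "bmin < t" "t < bmax" by auto
          then show False using noA eA t(2) by blast
        qed
        then show ?thesis using t by blast
      qed
      show ?thesis
      proof (cases "bmin = bmax")
        case True
        define jj where "jj = (p + bmin) mod n"
        have jj: "jj < n" using n0 jj_def by simp
        have "A \<subseteq> arc H (Suc jj mod n) jj" using AH arc_full[of jj H] jj n_def by blast
        moreover have "B \<subseteq> arc H jj (Suc jj mod n)"
        proof
          fix e assume "e \<in> B"
          then obtain t where "t \<in> IB" "e = g t" using B_IB by blast
          then have "t = bmin" using True bmin bmax by force
          then have "e = H ! jj" using \<open>e = g t\<close> unfolding g_def jj_def by simp
          then show "e \<in> arc H jj (Suc jj mod n)" using arc_start[of jj H] jj n_def by simp
        qed
        moreover have "Suc jj mod n \<noteq> jj" using Suc_mod_neq n2 jj n_def by simp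
        ultimately have "NEST H A B" unfolding NEST_def using jj n0 n_def
          by (intro exI[of _ "Suc jj mod n"] exI[of _ jj]) simp
        then show ?thesis by simp
      next
        case False
        then have lt: "bmin < bmax" using bltn by simp
        define i where "i = (p + bmax) mod n"
        define j where "j = (p + bmin) mod n"
        have jeq: "j = (p + bmax + (n - bmax + bmin)) mod n"
        proof -
          have "p + bmax + (n - bmax + bmin) = (p + bmin) + n" using bltn by simp
          then show ?thesis unfolding j_def by (metis mod_add_self2)
        qed
        have ieq: "i = (p + bmin + (bmax - bmin)) mod n" unfolding i_def using lt by simp
        have "A \<subseteq> arc H i j"
        proof
          fix e assume "e \<in> A"
          then obtain t where t: "t < n" "e = g t" "t \<le> bmin \<or> bmax \<le> t" using Arep by blast
          show "e \<in> arc H i j"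
          proof (cases "bmax \<le> t")
            case True
            have "H ! ((p + bmax + (t - bmax)) mod n) \<in> arc H ((p + bmax) mod n) ((p + bmax + (n - bmax + bmin)) mod n)"
              using arc_shift[of n H "n - bmax + bmin" "t - bmax" "p + bmax"] n0 n_def lt bltn t True by simp
            moreover have "p + bmax + (t - bmax) = p + t" using True by simp
            ultimately show ?thesis using t unfolding g_def i_def jeq by simp
          next
            case False
            then have tb: "t \<le> bmin" using t by simp
            have "H ! ((p + bmax + (n - bmax + t)) mod n) \<in> arc H ((p + bmax) mod n) ((p + bmax + (n - bmax + bmin)) mod n)"
              using arc_shift[of n H "n - bmax + bmin" "n - bmax + t" "p + bmax"] n0 n_def lt bltn tb by simp
            moreover have "(p + bmax + (n - bmax + t)) mod n = (p + t) mod n"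
            proof -
              have "p + bmax + (n - bmax + t) = (p + t) + n" using bltn by simp
              then show ?thesis by (metis mod_add_self2)
            qed
            ultimately show ?thesis using t unfolding g_def i_def jeq by simp
          qed
        qed
        moreover have "B \<subseteq> arc H j i"
        proof
          fix e assume "e \<in> B"
          then obtain t where t: "t \<in> IB" "e = g t" using B_IB by blast
          have tb: "bmin \<le> t" "t \<le> bmax" using t bmin bmax by auto
          have "H ! ((p + bmin + (t - bmin)) mod n) \<in> arc H ((p + bmin) mod n) ((p + bmin + (bmax - bmin)) mod n)"
            using arc_shift[of n H "bmax - bmin" "t - bmin" "p + bmin"] n0 n_def lt bltn tb by simp
          moreover have "p + bmin + (t - bmin) = p + t" using tb by simp
          ultimately show "e \<in> arc H j i" using t unfolding g_def j_def ieq by simp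
        qed
        moreover have "i \<noteq> j"
        proof
          assume "i = j"
          then have "g bmax = g bmin" unfolding g_def i_def j_def by simp
          then show False using inj[of bmax bmin] bltn lt by simp
        qed
        moreover have "i < n" "j < n" unfolding i_def j_def using n0 by auto
        ultimately have "NEST H A B" unfolding NEST_def n_def by blast
        then show ?thesis by simp
      qed
    qed
  qed
qed

lemma card_ge4_ALT:
  assumes dH: "distinct H" and AH: "A \<subseteq> set H" and c: "4 \<le> card A"
  shows "ALT H A A"
proof -
  define n where "n = length H"
  define IA where "IA = {k. k < n \<and> H ! k \<in> A}"
  have img: "A = (\<lambda>k. H ! k) ` IA"
  proof
    show "A \<subseteq> (\<lambda>k. H ! k) ` IA"
    proof
      fix e assume "e \<in> A"
      then have "e \<in> set H" using AH by blast
      then obtain m where "m < n" "e = H ! m" using set_nth_ex[of e H] n_def by blast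
      then show "e \<in> (\<lambda>k. H ! k) ` IA" using \<open>e \<in> A\<close> unfolding IA_def by blast
    qed
    show "(\<lambda>k. H ! k) ` IA \<subseteq> A" unfolding IA_def by blast
  qed
  have injo: "inj_on (\<lambda>k. H ! k) IA"
    unfolding inj_on_def IA_def n_def using dH by (simp add: nth_eq_iff_index_eq)
  have fin: "finite IA" unfolding IA_def by simp
  have cIA: "card IA = card A" using img injo card_image by metis
  define xs where "xs = sorted_list_of_set IA"
  have xs: "sorted_wrt (<) xs" "set xs = IA" "length xs = card IA"
    unfolding xs_def using fin by (auto simp: strict_sorted_list_of_set)
  have l4: "4 \<le> length xs" using xs c cIA by simp
  have inIA: "xs ! m \<in> IA" if "m < 4" for m using l4 that xs(2) nth_mem by (metis less_le_trans)
  have o: "xs!0 < xs!1" "xs!1 < xs!2" "xs!2 < xs!3"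
    using sorted_wrt_nth_less[OF xs(1)] l4 by auto
  have lt: "xs!3 < n" using inIA[of 3] unfolding IA_def by simp
  have mem: "H ! (xs!0) \<in> A" "H ! (xs!1) \<in> A" "H ! (xs!2) \<in> A" "H ! (xs!3) \<in> A"
    using inIA[of 0] inIA[of 1] inIA[of 2] inIA[of 3] unfolding IA_def by auto
  have ltall: "xs!0 < n" "xs!1 < n" "xs!2 < n" using o lt by auto
  have "cyc_order4 H (H ! (xs!0)) (H ! (xs!1)) (H ! (xs!2)) (H ! (xs!3))"
    unfolding cyc_order4_def using o lt ltall n_def
    by (intro exI[of _ 0] exI[of _ "xs!0"] exI[of _ "xs!1"] exI[of _ "xs!2"] exI[of _ "xs!3"]) simp
  moreover have "distinct [H ! (xs!0), H ! (xs!1), H ! (xs!2), H ! (xs!3)]"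
    using o lt ltall dH n_def by (auto simp: nth_eq_iff_index_eq)
  ultimately show ?thesis unfolding ALT_def using mem by blast
qed

lemma card_le2_NEST:
  assumes n2: "2 \<le> length H" and AH: "A \<subseteq> set H" and c: "card A \<le> 2"
  shows "NEST H A A"
proof -
  define n where "n = length H"
  have fin: "finite A" using AH finite_subset by blast
  have "\<exists>i j. i < n \<and> j < n \<and> i \<noteq> j \<and> A \<subseteq> {H ! i, H ! j}"
  proof -
    have "card A = 0 \<or> card A = 1 \<or> card A = 2" using c by auto
    then show ?thesis
    proof (elim disjE)
      assume "card A = 0"
      then have "A = {}" using fin by simp
      moreover have "0 < n" "1 < n" using n2 n_def by linarith+
      ultimately show ?thesis by (intro exI[of _ 0] exI[of _ 1]) simp
    next
      assume "card A = 1"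
      then obtain e where e: "A = {e}" using card_1_singleton_iff by (metis One_nat_def)
      then have "e \<in> set H" using AH by blast
      then obtain m where m: "m < n" "e = H ! m" using set_nth_ex[of e H] n_def by blast
      have "Suc m mod n \<noteq> m" using Suc_mod_neq n2 m n_def by simp
      moreover have "Suc m mod n < n" using m by simp
      ultimately show ?thesis using e m by (intro exI[of _ m] exI[of _ "Suc m mod n"]) simp
    next
      assume "card A = 2"
      then obtain e f where ef: "A = {e, f}" "e \<noteq> f" using card_2_iff by metis
      then have "e \<in> set H" "f \<in> set H" using AH by auto
      then obtain m m' where m: "m < n" "e = H ! m" and m': "m' < n" "f = H ! m'"
        using set_nth_ex[of e H] set_nth_ex[of f H] n_def by blast
      have "m \<noteq> m'" using m m' ef by auto
      then show ?thesis using ef m m' by (intro exI[of _ m] exI[of _ m']) simp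
    qed
  qed
  then obtain i j where ij: "i < n" "j < n" "i \<noteq> j" "A \<subseteq> {H ! i, H ! j}" by blast
  have "A \<subseteq> arc H i j" "A \<subseteq> arc H j i"
    using ij arc_start[of i H j] arc_end[of i H j] arc_start[of j H i] arc_end[of j H i] n_def by auto
  then show ?thesis unfolding NEST_def using ij n_def by blast
qed



lemma arith1: assumes "i < n" "j = Suc i mod n" shows "(j + (n - 1)) mod n = i"
proof (cases "Suc i < n")
  case True
  then have "j = Suc i" using assms by simp
  then have "j + (n - 1) = i + n" using assms by simp
  then show ?thesis using assms by simp
next
  case False
  then have "Suc i = n" using assms by simp
  then have "j = 0" using assms by simp
  then show ?thesis using \<open>Suc i = n\<close> by simp
qed

lemma arith2: assumes "i < n" "2 \<le> n" "j = Suc i mod n" shows "(j + (n - 2)) mod n = (i + n - 1) mod n"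
proof (cases "Suc i < n")
  case True
  then have "j = Suc i" using assms by simp
  then have "j + (n - 2) = i + n - 1" using assms by simp
  then show ?thesis by simp
next
  case False
  then have "Suc i = n" using assms by simp
  then have "j = 0" using assms by simp
  have "i + n - 1 = (n - 2) + n" using \<open>Suc i = n\<close> assms by simp
  then have "(i + n - 1) mod n = (n - 2) mod n" by simp
  then show ?thesis using \<open>j = 0\<close> by simp
qed

lemma card2_le: "card {a, b} \<le> 2"
  by (cases "a = b") auto

theorem lemma2p6:
  fixes V :: "'a set" and E :: "'a \<Rightarrow> 'a \<Rightarrow> bool" and H :: "'a list" and u v :: 'a
  assumes "in_C V E"
    and "is_hole V E H"
    and "u \<in> V" and "v \<in> V" and "u \<noteq> v"
    and "u \<notin> set H" and "v \<notin> set H"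
    and "cross E H u v"
  shows "(\<exists>u' v' u'' v''. distinct [u', v', u'', v''] \<and> cyc_order4 H u' v' u'' v'' \<and>
            u' \<in> nbrs_in E H u \<and> u'' \<in> nbrs_in E H u \<and>
            v' \<in> nbrs_in E H v \<and> v'' \<in> nbrs_in E H v)
       \<or> (nbrs_in E H u = nbrs_in E H v \<and> card (nbrs_in E H u) = 3 \<and>
            (\<forall>x\<in>nbrs_in E H u. \<forall>y\<in>nbrs_in E H u. \<not> E x y) \<and> E u v)
       \<or> (nbrs_in E H u = nbrs_in E H v \<and>
            (\<exists>y. clone_of E H u y \<and> clone_of E H v y) \<and> E u v)"
proof -
  have g: "graph V E" and nth: "\<not> has_theta V E" and npy: "\<not> has_pyramid V E"
    using assms(1) unfolding in_C_def by auto
  have hH: "hole E H" "set H \<subseteq> V" using assms(2) unfolding is_hole_def by auto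
  define n where "n = length H"
  have n4: "4 \<le> n" and dH: "distinct H" using hH(1) unfolding hole_def n_def by auto
  have n2: "2 \<le> length H" using n4 n_def by simp
  define A where "A = nbrs_in E H u"
  define B where "B = nbrs_in E H v"
  have AH: "A \<subseteq> set H" "B \<subseteq> set H" unfolding A_def B_def by (rule nbrs_sub)+
  have notN: "\<not> NEST H A B" using assms(8) unfolding cross_def nested_def NEST_def A_def B_def by blast
  show ?thesis
  proof (cases "ALT H A B")
    case True
    then show ?thesis unfolding ALT_def A_def B_def by blast
  next
    case notALT: False
    have AsubB: "A \<subseteq> B"
    proof
      fix a assume aA: "a \<in> A"
      show "a \<in> B"
      proof (rule ccontr)
        assume "a \<notin> B"
        from comb1[OF dH n2 AH(1) AH(2) aA this] notN notALT show False by blast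
      qed
    qed
    have BsubA: "B \<subseteq> A"
    proof
      fix a assume aB: "a \<in> B"
      show "a \<in> A"
      proof (rule ccontr)
        assume "a \<notin> A"
        from comb1[OF dH n2 AH(2) AH(1) aB this] notN notALT NEST_sym ALT_sym show False by blast
      qed
    qed
    have AB: "A = B" using AsubB BsubA by blast
    have fin: "finite A" using AH finite_subset by blast
    have c3: "card A = 3"
    proof -
      have "\<not> 4 \<le> card A" using card_ge4_ALT[OF dH AH(1)] notALT AB by auto
      moreover have "\<not> card A \<le> 2" using card_le2_NEST[OF n2 AH(1)] notN AB by auto
      ultimately show ?thesis by simp
    qed
    have sym: "\<forall>x y. E x y \<longrightarrow> E y x" using graph_sym_irr[OF g] by (rule conjunct1)
  have irr: "\<forall>x. \<not> E x x" using graph_sym_irr[OF g] by (rule conjunct2)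
    have EA: "E u e" "E v e" if eA: "e \<in> A" for e
    proof -
      show "E u e" using nbrs_E[of e E H u] eA unfolding A_def by simp
      have "e \<in> B" using eA AB by simp
      then show "E v e" using nbrs_E[of e E H v] unfolding B_def by simp
    qed
    show ?thesis
    proof (cases "\<forall>x\<in>A. \<forall>y\<in>A. \<not> E x y")
      case True
      obtain x y z where xyz: "A = {x,y,z}" "x \<noteq> y" "y \<noteq> z" "x \<noteq> z"
        using c3[unfolded card_3_iff] by blast
      have Euv: "E u v"
      proof (rule ccontr)
        assume nuv: "\<not> E u v"
        have inV: "x \<in> V" "y \<in> V" "z \<in> V" using xyz AH hH(2) by auto
        have "has_theta V E"
          using theta_indep[OF g assms(3,4,5) nuv inV] xyz EA True by auto
        then show False using nth by simp
      qed
      show ?thesis using AB c3 True Euv unfolding A_def B_def by blast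
    next
      case False
      then obtain p q where pq: "p \<in> A" "q \<in> A" "E p q" by blast
      obtain i j where ij: "i < n" "j < n" "H!i \<in> A" "H!j \<in> A" "j = Suc i mod n"
      proof -
        obtain i0 where i0: "i0 < length H" "p = H!i0" using set_nth_ex[of p H] pq AH by blast
        obtain j0 where j0: "j0 < length H" "q = H!j0" using set_nth_ex[of q H] pq AH by blast
        have "j0 = Suc i0 mod length H \<or> i0 = Suc j0 mod length H"
          using hole_adj[OF hH(1) i0(1) j0(1)] pq i0 j0 by simp
        then show thesis
        proof
          assume "j0 = Suc i0 mod length H"
          then show thesis using that[of i0 j0] i0 j0 pq n_def by simp
        next
          assume "i0 = Suc j0 mod length H"
          then show thesis using that[of j0 i0] i0 j0 pq n_def by simp
        qed
      qed
      define L where "L = rotate j H"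
      have hL: "hole E L" "set L \<subseteq> V" "length L = n" "set L = set H"
        unfolding L_def using hole_rotate[OF hH(1)] hH(2) n_def by auto
      have n0: "0 < length H" using n4 n_def by linarith
      have L0: "L!0 = H!j" unfolding L_def using nth_rotate[of 0 H j] n0 ij n_def by simp
      have Ln1: "L!(n-1) = H!i"
      proof -
        have "n - 1 < length H" using n4 n_def by simp
        then have "L!(n-1) = H!((j + (n-1)) mod n)" unfolding L_def using nth_rotate n_def by metis
        then show ?thesis using arith1[OF ij(1) ij(5)] by simp
      qed
      have dij: "H!i \<noteq> H!j"
      proof
        assume "H!i = H!j"
        then have "i = j" using dH ij n_def by (simp add: nth_eq_iff_index_eq)
        then show False using Suc_mod_neq[of n i] n4 ij by simp
      qed
      obtain c where c: "c \<in> A" "c \<noteq> H!i" "c \<noteq> H!j"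
      proof -
        have "\<not> A \<subseteq> {H!i, H!j}"
        proof
          assume "A \<subseteq> {H!i, H!j}"
          then have "card A \<le> card {H!i, H!j}" by (simp add: card_mono)
          then show False using c3 card2_le[of "H!i" "H!j"] by simp
        qed
        then show thesis using that by blast
      qed
      have cL: "c \<in> set L" using c(1) AH(1) hL(4) by blast
      obtain q where q: "q < n" "c = L!q"
        using set_nth_ex[OF cL] hL(3) by metis
      have q0: "q \<noteq> 0"
      proof
        assume "q = 0"
        then have "c = H!j" using q(2) L0 by simp
        then show False using c(3) by simp
      qed
      have qn: "q \<noteq> n - 1"
      proof
        assume "q = n - 1"
        then have "c = H!i" using q(2) Ln1 by simp
        then show False using c(2) by simp
      qed
      have Aeq: "A = {L!0, L!(n-1), L!q}"
      proof -
        have sub: "{L!0, L!(n-1), L!q} \<subseteq> A" using ij c q L0 Ln1 by auto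
        have "card {L!0, L!(n-1), L!q} = 3" using L0 Ln1 q c dij by auto
        then show ?thesis using card_subset_eq[OF fin sub] c3 by simp
      qed
      have nLu: "nbrs_in E L u = A" unfolding A_def nbrs_in_def using hL(4) by simp
      have nLv: "nbrs_in E L v = A" unfolding AB B_def nbrs_in_def using hL(4) by simp
      have uvL: "u \<notin> set L" "v \<notin> set L" using assms(6,7) hL(4) by auto
      consider (q1) "q = 1" | (q2) "q = n - 2" | (q3) "2 \<le> q" "q + 3 \<le> n"
        using q q0 qn by linarith
      then show ?thesis
      proof cases
        case q1
        define L2 where "L2 = rotate 1 L"
        have hL2: "hole E L2" "set L2 \<subseteq> V" "length L2 = n" "set L2 = set L"
          unfolding L2_def using hole_rotate[OF hL(1), of 1] hL by auto
        have e1: "L2!(n-2) = L!(n-1)"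
        proof -
          have "n - 2 < length L" using hL n4 by simp
          then have "L2!(n-2) = L!((1 + (n-2)) mod n)" unfolding L2_def using nth_rotate hL(3) by metis
          moreover have "(1 + (n-2)) mod n = n - 1" using n4 by simp
          ultimately show ?thesis by simp
        qed
        have e2: "L2!(n-1) = L!0"
        proof -
          have "n - 1 < length L" using hL n4 by simp
          then have "L2!(n-1) = L!((1 + (n-1)) mod n)" unfolding L2_def using nth_rotate hL(3) by metis
          moreover have "(1 + (n-1)) mod n = 0" using n4 by simp
          ultimately show ?thesis by simp
        qed
        have e3: "L2!0 = L!1"
        proof -
          have "0 < length L" using hL n4 by simp
          then have "L2!0 = L!((1 + 0) mod n)" unfolding L2_def using nth_rotate hL(3) by metis
          moreover have "(1 + 0) mod n = 1" using n4 by simp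
          ultimately show ?thesis by simp
        qed
        have nL2: "nbrs_in E L2 w = nbrs_in E L w" for w unfolding nbrs_in_def using hL2(4) by simp
        have A2: "A = {L2!(length L2 - 2), L2!(length L2 - 1), L2!0}"
          using Aeq e1 e2 e3 q1 hL2(3) by auto
        have Euv: "E u v"
        proof (rule ccontr)
          assume nuv: "\<not> E u v"
          have "has_theta V E"
            using theta_clone[OF g hL2(1) hL2(2) assms(3,4)] uvL hL2(4) assms(5) nuv nL2 nLu nLv A2 by auto
          then show False using nth by simp
        qed
        have L1: "L!1 = H!(Suc j mod n)"
        proof -
          have "1 < length H" using n4 n_def by simp
          then have "L!1 = H!((j + 1) mod length H)" unfolding L_def using nth_rotate by metis
          then show ?thesis using n_def by simp
        qed
        have "j + n - 1 = j + (n - 1)" using n4 by simp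
        then have ar: "(j + n - 1) mod n = i" using arith1[OF ij(1) ij(5)] by simp
        have cl: "clone_of E H w (H!j)" if "w \<notin> set H" "nbrs_in E H w = A" for w
          unfolding clone_of_def using that ij ar Aeq L0 Ln1 L1 q1 n_def
          by (intro conjI exI[of _ j]) auto
        show ?thesis using cl[of u] cl[of v] assms(6,7) AB Euv unfolding A_def B_def by blast
      next
        case q2
        have A2: "A = {L!(length L - 2), L!(length L - 1), L!0}"
          using Aeq q2 hL(3) by auto
        have Euv: "E u v"
        proof (rule ccontr)
          assume nuv: "\<not> E u v"
          have "has_theta V E"
            using theta_clone[OF g hL(1) hL(2) assms(3,4)] uvL assms(5) nuv nLu nLv A2 by auto
          then show False using nth by simp
        qed
        have Ln2: "L!(n-2) = H!((i + n - 1) mod n)"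
        proof -
          have "n - 2 < length H" using n4 n_def by simp
          then have "L!(n-2) = H!((j + (n-2)) mod length H)" unfolding L_def using nth_rotate by metis
          then show ?thesis using arith2[OF ij(1) _ ij(5)] n4 n_def by simp
        qed
        have cl: "clone_of E H w (H!i)" if "w \<notin> set H" "nbrs_in E H w = A" for w
          unfolding clone_of_def using that ij Aeq L0 Ln1 Ln2 q2 n_def
          by (intro conjI exI[of _ i]) auto
        show ?thesis using cl[of u] cl[of v] assms(6,7) AB Euv unfolding A_def B_def by blast
      next
        case q3
        have "has_pyramid V E"
          using pyramid_lem[OF g hL(1) hL(2) assms(3) uvL(1) _ q3(1)] nLu Aeq q3(2) hL(3) by auto
        then show ?thesis using npy by simp
      qed
    qed
  qed
qed


end
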